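(* Let $m\ge1$ and let ${\bf d}^m=(d_1,\dots,d_m)$ be positive integers. Let $j\ge2$ be an integer, and order the $d_i$ so that $d_1,\dots,d_{k_j}$ are exactly those divisible by $j$ (with $0\le k_j\le m$), while $d_{k_j+1},\dots,d_m$ are not divisible by $j$. Put $s_m=\sum_{i=1}^m d_i$, $\pi_m=\prod_{i=1}^m d_i$, and let ${\bf d}^m_j=(d_1,\dots,d_{k_j},\,jd_{k_j+1},\dots,jd_m)$. Then for every integer $s$, $$W_j(s,{\bf d}^m)=\frac{j^{k_j-m}}{(m-1)!\,\pi_m}\sum_{r_{k_j+1}=0}^{j-1}\cdots\sum_{r_m=0}^{j-1} B^{(m)}_{m-1}\Big(s+s_m+\sum_{i=k_j+1}^m r_id_i,\ {\bf d}^m_j\Big)\,\Psi_j\Big(s+s_m+\sum_{i=k_j+1}^m r_id_i\Big),$$ where, if $k_j=m$, the multiple sum consists of the single term with empty sum $\sum_{i=k_j+1}^m r_id_i=0$.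
   Context: The restricted partition function $W(s,{\bf d}^m)$ is the number of partitions of $s$ into parts from $\{d_1,\dots,d_m\}$. For an integer $j\ge1$, the Sylvester wave $W_j(s,{\bf d}^m)$ is defined as the coefficient of $t^{-1}$ in the Laurent expansion in ascending powers of $t$ of $$F_j(s,t)=\sum_{\rho}\frac{\rho^{-s}e^{st}}{\prod_{k=1}^m\big(1-\rho^{d_k}e^{-d_kt}\big)},$$ the sum running over all primitive $j$-th roots of unity $\rho=e^{2\pi i n/j}$, $1\le n\le j$, $\gcd(n,j)=1$. (Then $W(s,{\bf d}^m)=\sum_j W_j(s,{\bf d}^m)$, the sum over all divisors $j$ of the $d_i$.) For an integer $q\ge1$ and nonzero numbers ${\bf e}=(e_1,\dots,e_q)$, the Bernoulli polynomials of higher order $B^{(q)}_n(x,{\bf e})$ are defined by $$\frac{e^{xt}\,t^q\prod_{i=1}^q e_i}{\prod_{i=1}^q (e^{e_it}-1)}=\sum_{n=0}^\infty B^{(q)}_n(x,{\bf e})\frac{t^n}{n!}.$$ The prime circulator is $\Psi_j(s)=\sum_{n}\exp(2\pi i n s/j)$, summed over $1\le n\le j$ with $\gcd(n,j)=1$. *)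

theory Defs
  imports "HOL-Complex_Analysis.Complex_Analysis" "HOL-Library.FuncSet"
begin

text \<open>Primitive j-th roots of unity are indexed by n with 1 <= n <= j, gcd(n,j)=1.\<close>
definition prim_idx :: "nat \<Rightarrow> nat set" where
  "prim_idx j = {n \<in> {1..j}. coprime n j}"

definition root_of :: "nat \<Rightarrow> nat \<Rightarrow> complex" where
  "root_of j n = exp (2 * of_real pi * \<i> * of_nat n / of_nat j)"

text \<open>The function F_j(s,t); the tuple d^m is d 1, ..., d m.\<close>
definition sylF :: "nat \<Rightarrow> nat \<Rightarrow> (nat \<Rightarrow> nat) \<Rightarrow> int \<Rightarrow> complex \<Rightarrow> complex" where
  "sylF j m d s t = (\<Sum>n\<in>prim_idx j.
      (root_of j n) powi (- s) * exp (of_int s * t) /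
      (\<Prod>k=1..m. (1 - (root_of j n) ^ (d k) * exp (- of_nat (d k) * t))))"

text \<open>Sylvester wave: coefficient of t^(-1) in the Laurent expansion at 0, i.e. the residue.\<close>
definition sylvester_wave :: "nat \<Rightarrow> nat \<Rightarrow> (nat \<Rightarrow> nat) \<Rightarrow> int \<Rightarrow> complex" where
  "sylvester_wave j m d s = residue (sylF j m d s) 0"

text \<open>Generating function of higher order Bernoulli polynomials, with its removable
  singularity at t = 0 filled in by the limit value 1.\<close>
definition ber_gen :: "nat \<Rightarrow> (nat \<Rightarrow> complex) \<Rightarrow> complex \<Rightarrow> complex \<Rightarrow> complex" where
  "ber_gen q e x t = (if t = 0 then 1 else
      exp (x * t) * t ^ q * (\<Prod>i=1..q. e i) / (\<Prod>i=1..q. (exp (e i * t) - 1)))"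

text \<open>B^(q)_n(x, e) = n-th Taylor coefficient times n!, i.e. the n-th derivative at 0.\<close>
definition higher_bernoulli :: "nat \<Rightarrow> nat \<Rightarrow> complex \<Rightarrow> (nat \<Rightarrow> complex) \<Rightarrow> complex" where
  "higher_bernoulli q n x e = (deriv ^^ n) (ber_gen q e x) 0"

definition prime_circ :: "nat \<Rightarrow> int \<Rightarrow> complex" where
  "prime_circ j s = (\<Sum>n\<in>prim_idx j. exp (2 * of_real pi * \<i> * of_nat n * of_int s / of_nat j))"

end

theory Submission
  imports Defs
begin


lemma ev_exp_ne1:
  fixes a :: complex assumes "a \<noteq> 0"
  shows "eventually (\<lambda>t. exp (a * t) \<noteq> 1) (at 0)"
proof -
  have "((\<lambda>t. exp (a * t)) has_field_derivative a) (at 0)"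
    by (auto intro!: derivative_eq_intros)
  hence "((\<lambda>t. (exp (a * t) - 1) / t) \<longlongrightarrow> a) (at 0)"
    by (simp add: has_field_derivative_iff)
  hence "eventually (\<lambda>t. (exp (a * t) - 1) / t \<noteq> 0) (at 0)"
    using assms tendsto_imp_eventually_ne by blast
  thus ?thesis by (rule eventually_mono) auto
qed

lemma ev_exp_ne1_all:
  fixes e :: "nat \<Rightarrow> complex" assumes "\<forall>i\<in>{1..q}. e i \<noteq> 0"
  shows "\<exists>r>0. \<forall>t. t \<noteq> 0 \<and> norm t < r \<longrightarrow> (\<forall>i\<in>{1..q}. exp (e i * t) \<noteq> 1)"
proof -
  have "eventually (\<lambda>t. \<forall>i\<in>{1..q}. exp (e i * t) \<noteq> 1) (at 0)"
    using assms by (intro eventually_ball_finite) (auto intro: ev_exp_ne1)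
  thus ?thesis unfolding eventually_at by (auto simp: dist_norm)
qed

lemma geo_factor:
  fixes a u :: complex assumes "j \<ge> 1" "exp (of_nat j * a * u) \<noteq> 1"
  shows "1 / (1 - exp (- a * u)) = (\<Sum>r<j. exp (of_nat (Suc r) * a * u)) / (exp (of_nat j * a * u) - 1)"
proof -
  define y where "y = exp (a * u)"
  have yj: "exp (of_nat j * a * u) = y ^ j" unfolding y_def
    by (metis exp_of_nat_mult mult.assoc)
  have y1: "y \<noteq> 1" using assms yj by auto
  have y0: "y \<noteq> 0" unfolding y_def by simp
  have s: "(\<Sum>r<j. exp (of_nat (Suc r) * a * u)) = y * (\<Sum>r<j. y ^ r)"
    unfolding sum_distrib_left
    by (intro sum.cong refl) (metis exp_of_nat_mult mult.assoc power_Suc y_def)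
  have em: "exp (- a * u) = 1 / y" unfolding y_def by (simp add: exp_minus field_simps)
  have "y ^ j \<noteq> 1" using assms yj by auto
  have d1: "1 - y \<noteq> 0" "y - 1 \<noteq> 0" "1 - y ^ j \<noteq> 0" "y ^ j - 1 \<noteq> 0" using y1 \<open>y ^ j \<noteq> 1\<close> by auto
  have l: "1 / (1 - 1 / y) = y / (y - 1)" using y0 d1 by (simp add: field_simps)
  have r: "y * ((1 - y ^ j) / (1 - y)) / (y ^ j - 1) = y / (y - 1)"
  proof -
    have e: "(1 - y) * (y ^ j - 1) = (y - 1) * (1 - y ^ j)" by (simp add: algebra_simps)
    have "y * ((1 - y ^ j) / (1 - y)) / (y ^ j - 1) = y * (1 - y ^ j) / ((1 - y) * (y ^ j - 1))"
      by simp
    also have "\<dots> = y * (1 - y ^ j) / ((y - 1) * (1 - y ^ j))" by (simp only: e)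
    also have "\<dots> = y / (y - 1)" using d1 by simp
    finally show ?thesis .
  qed
  show ?thesis unfolding s em yj sum_gp_strict using y1 l r by simp
qed


lemma lim_exp_quot:
  fixes a :: complex
  shows "((\<lambda>t. (exp (a * t) - 1) / t) \<longlongrightarrow> a) (at 0)"
proof -
  have "((\<lambda>t. exp (a * t)) has_field_derivative a) (at 0)"
    by (auto intro!: derivative_eq_intros)
  thus ?thesis by (simp add: has_field_derivative_iff)
qed

lemma ber_gen_holo:
  fixes e :: "nat \<Rightarrow> complex"
  assumes e0: "\<forall>i\<in>{1..q}. e i \<noteq> 0" and "r > 0"
    and r: "\<forall>t. t \<noteq> 0 \<and> norm t < r \<longrightarrow> (\<forall>i\<in>{1..q}. exp (e i * t) \<noteq> 1)"
  shows "ber_gen q e x holomorphic_on ball 0 r"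
proof -
  define f where "f = (\<lambda>t. exp (x * t) * t ^ q * (\<Prod>i=1..q. e i) / (\<Prod>i=1..q. (exp (e i * t) - 1)))"
  have eq: "ber_gen q e x = (\<lambda>y. if y = 0 then 1 else f y)"
    by (auto simp: ber_gen_def f_def fun_eq_iff)
  have holo: "f holomorphic_on ball 0 r - {0}"
    unfolding f_def
  proof (intro holomorphic_intros)
    fix t :: complex assume "t \<in> ball 0 r - {0}"
    with r show "(\<Prod>i=1..q. (exp (e i * t) - 1)) \<noteq> 0" by auto
  qed
  have feq: "f t = exp (x * t) * (\<Prod>i=1..q. e i) / (\<Prod>i=1..q. (exp (e i * t) - 1) / t)"
    if "t \<noteq> 0" for t
    unfolding f_def prod_dividef using that by (simp add: field_simps)
  have "((\<lambda>t. exp (x * t) * (\<Prod>i=1..q. e i) / (\<Prod>i=1..q. (exp (e i * t) - 1) / t)) \<longlongrightarrow>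
        exp (x * 0) * (\<Prod>i=1..q. e i) / (\<Prod>i=1..q. e i)) (at 0)"
    using e0 by (intro tendsto_intros lim_exp_quot) auto
  hence "((\<lambda>t. exp (x * t) * (\<Prod>i=1..q. e i) / (\<Prod>i=1..q. (exp (e i * t) - 1) / t)) \<longlongrightarrow> 1) (at 0)"
    using e0 by simp
  hence lim: "(f \<longlongrightarrow> 1) (at 0)"
    by (rule Lim_transform_eventually) (auto simp: eventually_at_filter feq)
  show ?thesis unfolding eq
    by (rule removable_singularity[OF holo _ lim]) simp
qed


lemma higher_deriv_sum:
  fixes f :: "'i \<Rightarrow> complex \<Rightarrow> complex"
  assumes "finite I" "\<And>i. i \<in> I \<Longrightarrow> f i holomorphic_on A" "open A" "z \<in> A"
  shows "(deriv ^^ n) (\<lambda>w. \<Sum>i\<in>I. f i w) z = (\<Sum>i\<in>I. (deriv ^^ n) (f i) z)"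
  using assms(1,2)
proof (induction I rule: finite_induct)
  case empty
  then show ?case by simp
next
  case (insert a I)
  have "(deriv ^^ n) (\<lambda>w. \<Sum>i\<in>insert a I. f i w) z = (deriv ^^ n) (\<lambda>w. f a w + (\<Sum>i\<in>I. f i w)) z"
    using insert by simp
  also have "\<dots> = (deriv ^^ n) (f a) z + (deriv ^^ n) (\<lambda>w. \<Sum>i\<in>I. f i w) z"
    using insert assms(3,4) by (intro higher_deriv_add) (auto intro!: holomorphic_on_sum)
  finally show ?case using insert by simp
qed

lemma exp_int_2pi: "exp (2 * of_real pi * \<i> * of_int x) = 1"
proof -
  have "exp (2 * of_real pi * \<i>) powi x = exp (of_int x * (2 * of_real pi * \<i>))"
    by (rule exp_power_int)
  then have "exp (of_int x * (2 * of_real pi * \<i>)) = 1" by simp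
  thus ?thesis by (metis mult.commute)
qed

lemma psi_neg:
  assumes "j \<ge> 2"
  shows "(\<Sum>n\<in>prim_idx j. exp (- of_int x * (2 * of_real pi * \<i> * of_nat n / of_nat j))) = prime_circ j x"
  unfolding prime_circ_def
proof (rule sum.reindex_bij_witness[where i="\<lambda>n. j - n" and j="\<lambda>n. j - n"])
  have lt: "n < j" if "n \<in> prim_idx j" for n
  proof -
    have "n \<le> j" "coprime n j" using that by (auto simp: prim_idx_def)
    moreover have "n \<noteq> j" using assms \<open>coprime n j\<close> by auto
    ultimately show ?thesis by simp
  qed
  have mem: "j - n \<in> prim_idx j" if n: "n \<in> prim_idx j" for n
    using lt[OF n] n by (auto simp: prim_idx_def coprime_iff_gcd_eq_1 gcd_diff2_nat)
  show "j - (j - n) = n" if n: "n \<in> prim_idx j" for n using lt[OF n] by simp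
  show "j - (j - n) = n" if n: "n \<in> prim_idx j" for n using lt[OF n] by simp
  show "j - n \<in> prim_idx j" if n: "n \<in> prim_idx j" for n using mem[OF n] .
  show "j - n \<in> prim_idx j" if n: "n \<in> prim_idx j" for n using mem[OF n] .
  fix n assume n: "n \<in> prim_idx j"
  have jn: "of_nat (j - n) = (of_nat j - of_nat n :: complex)" using lt[OF n] by (simp add: of_nat_diff)
  have j0: "(of_nat j :: complex) \<noteq> 0" using assms by simp
  have "2 * of_real pi * \<i> * of_nat (j - n) * of_int x / of_nat j
        = 2 * of_real pi * \<i> * of_int x + (- of_int x * (2 * of_real pi * \<i> * of_nat n / of_nat j))"
    unfolding jn using j0 by (simp add: field_simps)
  thus "exp (2 * of_real pi * \<i> * of_nat (j - n) * of_int x / of_nat j) =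
        exp (- of_int x * (2 * of_real pi * \<i> * of_nat n / of_nat j))"
    by (simp only: exp_add exp_int_2pi mult_1_left)
qed

lemma main_identity:
  fixes d :: "nat \<Rightarrow> nat" and s :: int and u :: complex and ee :: "nat \<Rightarrow> complex"
  assumes km: "k \<le> m" and j1: "j \<ge> 1"
    and ee_def: "ee = (\<lambda>i. if i \<le> k then of_nat (d i) else of_nat (j * d i))"
    and ne: "\<forall>i\<in>{1..m}. exp (ee i * u) \<noteq> 1"
  shows "exp (of_int s * u) / (\<Prod>i=1..m. (1 - exp (- of_nat (d i) * u))) =
    (\<Sum>r\<in>PiE {k+1..m} (\<lambda>_. {0..<j}). exp (of_int (s + int (\<Sum>i=1..m. d i) + int (\<Sum>i=k+1..m. r i * d i)) * u))
      / (\<Prod>i=1..m. (exp (ee i * u) - 1))"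
proof -
  have split: "{1..m} = {1..k} \<union> {k+1..m}" "{1..k} \<inter> {k+1..m} = {}" using km by auto
  have F1: "1 / (1 - exp (- of_nat (d i) * u)) = exp (of_nat (d i) * u) / (exp (ee i * u) - 1)"
    if i: "i \<in> {1..k}" for i
  proof -
    have eei: "ee i = of_nat (d i)" using i ee_def by auto
    define y where "y = exp (of_nat (d i) * u)"
    have y1: "y \<noteq> 1" using ne i km eei unfolding y_def by (metis atLeastAtMost_iff le_trans)
    have y0: "y \<noteq> 0" unfolding y_def by simp
    have em: "exp (- of_nat (d i) * u) = 1 / y" unfolding y_def by (simp add: exp_minus field_simps)
    have "1 / (1 - 1 / y) = y / (y - 1)" using y0 y1 by (simp add: field_simps)
    then show ?thesis unfolding eei em y_def[symmetric] .
  qed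
  have F2: "1 / (1 - exp (- of_nat (d i) * u)) = (\<Sum>r\<in>{0..<j}. exp (of_nat (Suc r) * of_nat (d i) * u)) / (exp (ee i * u) - 1)"
    if i: "i \<in> {k+1..m}" for i
  proof -
    have eei: "ee i * u = of_nat j * of_nat (d i) * u" using i ee_def by auto
    have "exp (of_nat j * of_nat (d i) * u) \<noteq> 1" using ne i eei by (metis atLeastAtMost_iff le_trans le_add2)
    then show ?thesis unfolding eei atLeast0LessThan by (rule geo_factor[OF j1])
  qed
  have L: "exp (of_int s * u) / (\<Prod>i=1..m. (1 - exp (- of_nat (d i) * u))) =
     exp (of_int s * u) * ((\<Prod>i\<in>{1..k}. exp (of_nat (d i) * u)) / (\<Prod>i\<in>{1..k}. (exp (ee i * u) - 1))) *
     ((\<Prod>i\<in>{k+1..m}. \<Sum>r\<in>{0..<j}. exp (of_nat (Suc r) * of_nat (d i) * u)) / (\<Prod>i\<in>{k+1..m}. (exp (ee i * u) - 1)))"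
  proof -
    have "exp (of_int s * u) / (\<Prod>i=1..m. (1 - exp (- of_nat (d i) * u))) =
       exp (of_int s * u) * (\<Prod>i=1..m. 1 / (1 - exp (- of_nat (d i) * u)))"
      by (simp add: prod_dividef)
    also have "(\<Prod>i=1..m. 1 / (1 - exp (- of_nat (d i) * u))) =
       (\<Prod>i\<in>{1..k}. 1 / (1 - exp (- of_nat (d i) * u))) * (\<Prod>i\<in>{k+1..m}. 1 / (1 - exp (- of_nat (d i) * u)))"
      unfolding split(1) by (rule prod.union_disjoint) (use split in auto)
    also have "(\<Prod>i\<in>{1..k}. 1 / (1 - exp (- of_nat (d i) * u))) = (\<Prod>i\<in>{1..k}. exp (of_nat (d i) * u) / (exp (ee i * u) - 1))"
      by (rule prod.cong[OF refl F1])
    also have "(\<Prod>i\<in>{k+1..m}. 1 / (1 - exp (- of_nat (d i) * u))) = (\<Prod>i\<in>{k+1..m}. (\<Sum>r\<in>{0..<j}. exp (of_nat (Suc r) * of_nat (d i) * u)) / (exp (ee i * u) - 1))"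
      by (rule prod.cong[OF refl F2])
    finally show ?thesis by (simp add: prod_dividef mult.assoc)
  qed
  have P: "(\<Prod>i\<in>{k+1..m}. \<Sum>r\<in>{0..<j}. exp (of_nat (Suc r) * of_nat (d i) * u)) =
     (\<Sum>g\<in>PiE {k+1..m} (\<lambda>_. {0..<j}). \<Prod>i\<in>{k+1..m}. exp (of_nat (Suc (g i)) * of_nat (d i) * u))"
    by (rule prod_sum_PiE) auto
  have X: "exp (of_int (s + int (\<Sum>i=1..m. d i) + int (\<Sum>i=k+1..m. g i * d i)) * u) =
     exp (of_int s * u) * (\<Prod>i\<in>{1..k}. exp (of_nat (d i) * u)) * (\<Prod>i\<in>{k+1..m}. exp (of_nat (Suc (g i)) * of_nat (d i) * u))"
    for g :: "nat \<Rightarrow> nat"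
  proof -
    have sd: "(\<Sum>i=1..m. d i) = (\<Sum>i\<in>{1..k}. d i) + (\<Sum>i\<in>{k+1..m}. d i)"
      unfolding split(1) by (rule sum.union_disjoint) (use split in auto)
    have "of_int (s + int (\<Sum>i=1..m. d i) + int (\<Sum>i=k+1..m. g i * d i)) * u =
       of_int s * u + (\<Sum>i\<in>{1..k}. of_nat (d i) * u) + (\<Sum>i\<in>{k+1..m}. of_nat (Suc (g i)) * of_nat (d i) * u)"
      unfolding sd by (simp add: sum_distrib_right sum_distrib_left sum.distrib algebra_simps)
    thus ?thesis by (simp add: exp_add exp_sum)
  qed
  have D: "(\<Prod>i=1..m. (exp (ee i * u) - 1)) = (\<Prod>i\<in>{1..k}. (exp (ee i * u) - 1)) * (\<Prod>i\<in>{k+1..m}. (exp (ee i * u) - 1))"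
    unfolding split(1) by (rule prod.union_disjoint) (use split in auto)
  show ?thesis unfolding L P D X
    by (simp add: sum_distrib_left sum_distrib_right sum_divide_distrib field_simps)
qed


lemma exp_ee_theta:
  fixes ee :: "nat \<Rightarrow> complex"
  assumes "j \<ge> 1" and ee_def: "ee = (\<lambda>i. if i \<le> k then of_nat (d i) else of_nat (j * d i))"
    and dv: "\<forall>i\<in>{1..k}. j dvd d i" and i: "i \<in> {1..m}"
  shows "exp (ee i * (t - 2 * of_real pi * \<i> * of_nat n / of_nat j)) = exp (ee i * t)"
proof -
  obtain c where c: "ee i = of_nat (j * c)"
  proof (cases "i \<le> k")
    case True
    then obtain c where "d i = j * c" using dv i by (meson atLeastAtMost_iff dvdE)
    then show ?thesis using that True ee_def by auto
  next
    case False
    then show ?thesis using that ee_def by auto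
  qed
  have j0: "(of_nat j :: complex) \<noteq> 0" using assms by simp
  have "ee i * (2 * of_real pi * \<i> * of_nat n / of_nat j) = 2 * of_real pi * \<i> * of_int (int (c * n))"
    unfolding c using j0 by (simp add: field_simps)
  hence "exp (ee i * (2 * of_real pi * \<i> * of_nat n / of_nat j)) = 1" by (simp only: exp_int_2pi)
  thus ?thesis by (simp add: right_diff_distrib exp_diff)
qed

lemma summand_eq:
  fixes d :: "nat \<Rightarrow> nat" and s :: int and t :: complex and ee :: "nat \<Rightarrow> complex"
  assumes km: "k \<le> m" and j1: "j \<ge> 1"
    and ee_def: "ee = (\<lambda>i. if i \<le> k then of_nat (d i) else of_nat (j * d i))"
    and dv: "\<forall>i\<in>{1..k}. j dvd d i"
    and ne: "\<forall>i\<in>{1..m}. exp (ee i * t) \<noteq> 1"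
  shows "root_of j n powi (- s) * exp (of_int s * t) /
      (\<Prod>l=1..m. (1 - (root_of j n) ^ (d l) * exp (- of_nat (d l) * t))) =
    (\<Sum>r\<in>PiE {k+1..m} (\<lambda>_. {0..<j}).
       exp (of_int (s + int (\<Sum>i=1..m. d i) + int (\<Sum>i=k+1..m. r i * d i)) * t) *
       exp (- of_int (s + int (\<Sum>i=1..m. d i) + int (\<Sum>i=k+1..m. r i * d i)) * (2 * of_real pi * \<i> * of_nat n / of_nat j)))
      / (\<Prod>i=1..m. (exp (ee i * t) - 1))"
proof -
  define \<theta> where "\<theta> = 2 * of_real pi * \<i> * of_nat n / (of_nat j :: complex)"
  have rt: "root_of j n = exp \<theta>" unfolding root_of_def \<theta>_def ..
  have th: "exp (ee i * (t - \<theta>)) = exp (ee i * t)" if "i \<in> {1..m}" for i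
    unfolding \<theta>_def by (rule exp_ee_theta[OF j1 ee_def dv that])
  have ne': "\<forall>i\<in>{1..m}. exp (ee i * (t - \<theta>)) \<noteq> 1"
    using ne th by simp
  have D: "(\<Prod>i=1..m. (exp (ee i * (t - \<theta>)) - 1)) = (\<Prod>i=1..m. (exp (ee i * t) - 1))"
    using th by (intro prod.cong) auto
  have n1: "root_of j n powi (- s) * exp (of_int s * t) = exp (of_int s * (t - \<theta>))"
    unfolding rt exp_power_int by (simp add: algebra_simps flip: exp_add)
  have n2: "(1 - (root_of j n) ^ (d l) * exp (- of_nat (d l) * t)) = (1 - exp (- of_nat (d l) * (t - \<theta>)))" for l
    unfolding rt by (simp add: algebra_simps flip: exp_add exp_of_nat_mult)
  have "root_of j n powi (- s) * exp (of_int s * t) /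
      (\<Prod>l=1..m. (1 - (root_of j n) ^ (d l) * exp (- of_nat (d l) * t))) =
      exp (of_int s * (t - \<theta>)) / (\<Prod>l=1..m. (1 - exp (- of_nat (d l) * (t - \<theta>))))"
    unfolding n1 n2 ..
  also have "\<dots> = (\<Sum>r\<in>PiE {k+1..m} (\<lambda>_. {0..<j}). exp (of_int (s + int (\<Sum>i=1..m. d i) + int (\<Sum>i=k+1..m. r i * d i)) * (t - \<theta>)))
      / (\<Prod>i=1..m. (exp (ee i * (t - \<theta>)) - 1))"
    by (rule main_identity[OF km j1 ee_def ne'])
  also have "\<dots> = (\<Sum>r\<in>PiE {k+1..m} (\<lambda>_. {0..<j}).
       exp (of_int (s + int (\<Sum>i=1..m. d i) + int (\<Sum>i=k+1..m. r i * d i)) * t) *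
       exp (- of_int (s + int (\<Sum>i=1..m. d i) + int (\<Sum>i=k+1..m. r i * d i)) * \<theta>))
      / (\<Prod>i=1..m. (exp (ee i * t) - 1))"
    unfolding D by (intro arg_cong2[where f="(/)"] sum.cong refl) (simp add: algebra_simps flip: exp_add)
  finally show ?thesis unfolding \<theta>_def .
qed

theorem mainTheorem2:
  fixes m j k :: nat and d :: "nat \<Rightarrow> nat" and s :: int
  assumes "m \<ge> 1"
    and "\<forall>i\<in>{1..m}. d i > 0"
    and "j \<ge> 2"
    and "k \<le> m"
    and "\<forall>i\<in>{1..k}. j dvd d i"
    and "\<forall>i\<in>{k+1..m}. \<not> j dvd d i"
  shows "sylvester_wave j m d s =
    (of_nat j) powi (int k - int m) / (fact (m - 1) * of_nat (\<Prod>i=1..m. d i)) *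
    (\<Sum>r\<in>PiE {k+1..m} (\<lambda>_. {0..<j}).
       higher_bernoulli m (m - 1)
         (of_int (s + int (\<Sum>i=1..m. d i) + int (\<Sum>i=k+1..m. r i * d i)))
         (\<lambda>i. if i \<le> k then of_nat (d i) else of_nat (j * d i)) *
       prime_circ j (s + int (\<Sum>i=1..m. d i) + int (\<Sum>i=k+1..m. r i * d i)))"
proof -
  define ee :: "nat \<Rightarrow> complex" where "ee = (\<lambda>i. if i \<le> k then of_nat (d i) else of_nat (j * d i))"
  define X where "X = (\<lambda>r::nat\<Rightarrow>nat. s + int (\<Sum>i=1..m. d i) + int (\<Sum>i=k+1..m. r i * d i))"
  define PE where "PE = (\<Prod>i=1..m. ee i)"
  define I where "I = PiE {k+1..m} (\<lambda>_::nat. {0..<j::nat})"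
  have j1: "j \<ge> 1" using assms by simp
  have km: "k \<le> m" using assms by simp
  have dv: "\<forall>i\<in>{1..k}. j dvd d i" using assms by simp
  have ee0: "\<forall>i\<in>{1..m}. ee i \<noteq> 0" using assms(2) j1 by (auto simp: ee_def)
  have PE0: "PE \<noteq> 0" using ee0 by (simp add: PE_def)
  have finI: "finite I" unfolding I_def by (intro finite_PiE) auto
  obtain r where r0: "r > 0" and r: "\<forall>t. t \<noteq> 0 \<and> norm t < r \<longrightarrow> (\<forall>i\<in>{1..m}. exp (ee i * t) \<noteq> 1)"
    using ev_exp_ne1_all[OF ee0] by blast
  define H where "H = (\<lambda>t. \<Sum>g\<in>I. (prime_circ j (X g) / PE) * ber_gen m ee (of_int (X g)) t)"
  have holo1: "ber_gen m ee x holomorphic_on ball 0 r" for x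
    by (rule ber_gen_holo[OF ee0 r0 r])
  have holo: "H holomorphic_on ball 0 r" unfolding H_def
    by (intro holomorphic_on_sum holomorphic_on_mult holomorphic_on_const holo1)
  have key: "sylF j m d s t = H t / t ^ Suc (m - 1)" if t0: "t \<noteq> 0" and tr: "norm t < r" for t
  proof -
    have ne: "\<forall>i\<in>{1..m}. exp (ee i * t) \<noteq> 1" using r t0 tr by blast
    define D where "D = (\<Prod>i=1..m. (exp (ee i * t) - 1))"
    have Dn: "D \<noteq> 0" using ne by (auto simp: D_def)
    have "sylF j m d s t = (\<Sum>n\<in>prim_idx j. (\<Sum>g\<in>I. exp (of_int (X g) * t) *
          exp (- of_int (X g) * (2 * of_real pi * \<i> * of_nat n / of_nat j))) / D)"
      unfolding sylF_def D_def I_def X_def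
      by (intro sum.cong refl summand_eq[OF km j1 ee_def dv ne])
    also have "\<dots> = (\<Sum>g\<in>I. exp (of_int (X g) * t) / D *
          (\<Sum>n\<in>prim_idx j. exp (- of_int (X g) * (2 * of_real pi * \<i> * of_nat n / of_nat j))))"
      by (simp add: sum_divide_distrib sum_distrib_left mult_ac sum.swap[of _ I])
    also have "\<dots> = (\<Sum>g\<in>I. exp (of_int (X g) * t) / D * prime_circ j (X g))"
      by (simp only: psi_neg[OF assms(3)])
    also have "\<dots> = (\<Sum>g\<in>I. (prime_circ j (X g) / PE) * ber_gen m ee (of_int (X g)) t / t ^ m)"
      using t0 Dn PE0 by (intro sum.cong refl) (simp add: ber_gen_def D_def PE_def field_simps)
    also have "\<dots> = H t / t ^ Suc (m - 1)"
      using assms(1) by (simp add: H_def sum_divide_distrib)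
    finally show ?thesis .
  qed
  have "sylvester_wave j m d s = residue (\<lambda>t. H t / t ^ Suc (m - 1)) 0"
    unfolding sylvester_wave_def
  proof (rule residue_cong)
    show "eventually (\<lambda>t. sylF j m d s t = H t / t ^ Suc (m - 1)) (at 0)"
      unfolding eventually_at using r0 key by (auto simp: dist_norm)
  qed simp
  also have "\<dots> = (deriv ^^ (m - 1)) H 0 / fact (m - 1)"
    by (rule residue_holomorphic_over_power'[OF _ _ holo]) (use r0 in auto)
  also have "(deriv ^^ (m - 1)) H 0 = (\<Sum>g\<in>I. (prime_circ j (X g) / PE) * higher_bernoulli m (m - 1) (of_int (X g)) ee)"
  proof -
    have "(deriv ^^ (m - 1)) H 0 = (\<Sum>g\<in>I. (deriv ^^ (m - 1)) (\<lambda>t. (prime_circ j (X g) / PE) * ber_gen m ee (of_int (X g)) t) 0)"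
      unfolding H_def using r0
      by (intro higher_deriv_sum[where A="ball 0 r"] finI holomorphic_on_mult holomorphic_on_const holo1) auto
    also have "\<dots> = (\<Sum>g\<in>I. (prime_circ j (X g) / PE) * higher_bernoulli m (m - 1) (of_int (X g)) ee)"
      unfolding higher_bernoulli_def using r0
      by (intro sum.cong refl higher_deriv_cmult[OF holo1, where x=0]) auto
    finally show ?thesis .
  qed
  finally have W: "sylvester_wave j m d s = (\<Sum>g\<in>I. (prime_circ j (X g) / PE) * higher_bernoulli m (m - 1) (of_int (X g)) ee) / fact (m - 1)" .
  have split: "{1..m} = {1..k} \<union> {k+1..m}" "{1..k} \<inter> {k+1..m} = {}" using km by auto
  have PEeq: "PE = of_nat j ^ (m - k) * of_nat (\<Prod>i=1..m. d i)"
  proof -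
    have "PE = (\<Prod>i\<in>{1..k}. ee i) * (\<Prod>i\<in>{k+1..m}. ee i)"
      unfolding PE_def split(1) by (rule prod.union_disjoint) (use split in auto)
    also have "(\<Prod>i\<in>{1..k}. ee i) = (\<Prod>i\<in>{1..k}. of_nat (d i))" by (intro prod.cong) (auto simp: ee_def)
    also have "(\<Prod>i\<in>{k+1..m}. ee i) = (\<Prod>i\<in>{k+1..m}. of_nat j * of_nat (d i))" by (intro prod.cong) (auto simp: ee_def)
    also have "\<dots> = of_nat j ^ (m - k) * (\<Prod>i\<in>{k+1..m}. of_nat (d i))" by (simp add: prod.distrib)
    also have "(\<Prod>i=1..m. d i) = (\<Prod>i\<in>{1..k}. d i) * (\<Prod>i\<in>{k+1..m}. d i)"
      unfolding split(1) by (rule prod.union_disjoint) (use split in auto)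
    ultimately show ?thesis by (simp add: ac_simps)
  qed
  have pw: "(of_nat j :: complex) powi (int k - int m) = inverse (of_nat j ^ (m - k))"
  proof -
    have e: "int k - int m = - int (m - k)" using km by simp
    show ?thesis unfolding e power_int_minus power_int_of_nat ..
  qed
  have fin: "sylvester_wave j m d s = (of_nat j) powi (int k - int m) / (fact (m - 1) * of_nat (\<Prod>i=1..m. d i)) *
     (\<Sum>g\<in>I. higher_bernoulli m (m - 1) (of_int (X g)) ee * prime_circ j (X g))"
    unfolding W pw PEeq sum_divide_distrib sum_distrib_left
    by (intro sum.cong refl) (simp only: divide_inverse inverse_mult_distrib mult_ac)
  show ?thesis using fin by (simp only: X_def ee_def I_def)
qed

end
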